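(* Let $0<\beta<1$ and let $f\colon B_1-\overline{B}_\beta\to\mathbb{C}$ be an orientation preserving biholomorphic map onto its image such that $f(B_1-\overline{B}_\beta)=\Omega-K$ for some bounded open set $\Omega\subset\mathbb{C}$ and some compact subset $K\subset\Omega$. Then there exists a holomorphic function $g\colon B_1-\overline{B}_\beta\to\mathbb{C}$ such that $g^2=1/\partial_z f$.
   Context: $B_r$ denotes the open disk of radius $r$ centered at $0$ in $\mathbb{C}$, and $B_1-\overline{B}_\beta=\{z:\beta<|z|<1\}$. *)

theory Defs
  imports "HOL-Complex_Analysis.Complex_Analysis"
begin

end

theory Submission
  imports Defs
begin

lemma const_exp1:
  fixes E :: "'a::topological_space \<Rightarrow> complex"
  assumes S: "connected S" and cE: "continuous_on S E" and e1: "\<And>x. x \<in> S \<Longrightarrow> exp (E x) = 1"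
  shows "E constant_on S"
proof (rule continuous_discrete_range_constant[OF S cE])
  fix x assume x: "x \<in> S"
  show "\<exists>e>0. \<forall>y. y \<in> S \<and> E y \<noteq> E x \<longrightarrow> e \<le> norm (E y - E x)"
  proof (intro exI[of _ "2*pi"] conjI allI impI)
    fix y assume y: "y \<in> S \<and> E y \<noteq> E x"
    obtain n where n: "Re (E x) = 0" "Im (E x) = of_int (2*n) * pi" using e1[OF x] exp_eq_1 by blast
    obtain m where m: "Re (E y) = 0" "Im (E y) = of_int (2*m) * pi" using e1 y exp_eq_1 by blast
    have "m \<noteq> n" using n m y complex_eqI by fastforce
    then have "1 \<le> \<bar>real_of_int (m - n)\<bar>" by linarith
    then have "2*pi \<le> 2*pi*\<bar>real_of_int (m - n)\<bar>" using pi_gt_zero by simp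
    also have "\<dots> = \<bar>2*pi*real_of_int (m - n)\<bar>" using pi_gt_zero by (simp add: abs_mult)
    also have "\<dots> = \<bar>Im (E y - E x)\<bar>" using n m by (simp add: algebra_simps)
    also have "\<dots> \<le> norm (E y - E x)" by (rule abs_Im_le_cmod)
    finally show "2*pi \<le> norm (E y - E x)" .
  qed simp
qed

lemma periodic_nat:
  fixes \<psi> :: "complex \<Rightarrow> 'b"
  assumes "\<And>w. w \<in> S \<Longrightarrow> w + p \<in> S" "\<And>w. w \<in> S \<Longrightarrow> w - p \<in> S"
    "\<And>w. w \<in> S \<Longrightarrow> \<psi> (w + p) = \<psi> w" "w \<in> S"
  shows "w + of_nat k * p \<in> S \<and> \<psi> (w + of_nat k * p) = \<psi> w \<and>
         w - of_nat k * p \<in> S \<and> \<psi> (w - of_nat k * p) = \<psi> w"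
proof (induction k)
  case 0 then show ?case using assms by simp
next
  case (Suc k)
  have e1: "w + of_nat (Suc k) * p = (w + of_nat k * p) + p" by (simp add: algebra_simps)
  have e2: "w - of_nat k * p = (w - of_nat (Suc k) * p) + p" by (simp add: algebra_simps)
  have e3: "w - of_nat (Suc k) * p = (w - of_nat k * p) - p" by (simp add: algebra_simps)
  have "\<psi> (w - of_nat k * p - p) = \<psi> (w - of_nat k * p)"
    using assms(3)[of "w - of_nat k * p - p"] assms(2) Suc by simp
  then show ?case using Suc assms(1,2,3) unfolding e1 e3 by simp
qed

lemma periodic_int:
  fixes \<psi> :: "complex \<Rightarrow> 'b"
  assumes "\<And>w. w \<in> S \<Longrightarrow> w + p \<in> S" "\<And>w. w \<in> S \<Longrightarrow> w - p \<in> S"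
    "\<And>w. w \<in> S \<Longrightarrow> \<psi> (w + p) = \<psi> w" "w \<in> S"
  shows "\<psi> (w + of_int n * p) = \<psi> w"
proof -
  have "n = int (nat n) \<or> n = - int (nat (-n))" by arith
  then show ?thesis
  proof
    assume "n = int (nat n)"
    then have "w + of_int n * p = w + of_nat (nat n) * p" by (metis of_int_of_nat_eq)
    then show ?thesis using periodic_nat[of S p \<psi> w, OF assms, of "nat n"] by metis
  next
    assume a: "n = - int (nat (-n))"
    have "(of_int n :: complex) = - of_nat (nat (-n))"
      by (subst a) (simp only: of_int_minus of_int_of_nat_eq)
    then have "w + of_int n * p = w - of_nat (nat (-n)) * p" by simp
    then show ?thesis using periodic_nat[of S p \<psi> w, OF assms, of "nat (-n)"] by simp
  qed
qed

lemma dq_cont: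
  fixes f :: "complex \<Rightarrow> complex"
  assumes holf: "f holomorphic_on A" and A: "open A"
  shows "continuous_on (A \<times> A) (\<lambda>p. if fst p = snd p then deriv f (fst p)
            else (f (fst p) - f (snd p)) / (fst p - snd p))"
    (is "continuous_on _ ?Q")
  unfolding continuous_on_eq_continuous_within
proof
  fix p assume p: "p \<in> A \<times> A"
  obtain a b where ab: "p = (a,b)" "a \<in> A" "b \<in> A" using p by auto
  show "continuous (at p within A \<times> A) ?Q"
  proof (cases "a = b")
    case False
    define U where "U = (A \<times> A) \<inter> {p. fst p \<noteq> snd p}"
    have oU: "open U" unfolding U_def
      by (intro open_Int open_Times A open_Collect_neq continuous_intros)
    have cf: "continuous_on A f" using holf holomorphic_on_imp_continuous_on by blast
    have "continuous_on U (\<lambda>p. (f (fst p) - f (snd p)) / (fst p - snd p))"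
      unfolding U_def
      by (intro continuous_intros continuous_on_compose2[OF cf]) auto
    then have "continuous_on U ?Q"
      by (rule continuous_on_eq) (auto simp: U_def)
    moreover have "p \<in> U" using ab False by (auto simp: U_def)
    ultimately have "isCont ?Q p" using oU continuous_on_eq_continuous_at by blast
    then show ?thesis using continuous_at_imp_continuous_at_within by blast
  next
    case True
    have cD: "continuous_on A (deriv f)"
      using holomorphic_deriv[OF holf A] holomorphic_on_imp_continuous_on by blast
    show ?thesis
      unfolding continuous_within_eps_delta
    proof (intro allI impI)
      fix e :: real assume e: "e > 0"
      obtain r1 where r1: "r1 > 0" "ball a r1 \<subseteq> A" using A ab openE by blast
      obtain r2 where r2: "r2 > 0" "\<And>y. y \<in> A \<Longrightarrow> dist y a < r2 \<Longrightarrow> dist (deriv f y) (deriv f a) < e/2"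
        using cD ab e unfolding continuous_on_iff by (metis half_gt_zero)
      define r where "r = min r1 r2"
      have r: "r > 0" "ball a r \<subseteq> A" using r1 r2 by (auto simp: r_def)
      have rD: "\<And>y. y \<in> ball a r \<Longrightarrow> norm (deriv f y - deriv f a) \<le> e/2"
        using r2 r by (smt (verit, best) dist_commute dist_norm mem_ball r_def subset_iff)
      show "\<exists>d>0. \<forall>x'\<in>A \<times> A. dist x' p < d \<longrightarrow> dist (?Q x') (?Q p) < e"
      proof (intro exI[of _ r] conjI ballI impI)
        fix q assume q: "q \<in> A \<times> A" "dist q p < r"
        obtain z w where zw: "q = (z,w)" by (cases q)
        have dz: "dist z a < r" using q zw ab dist_fst_le[of q p] by auto
        have dw: "dist w a < r" using q zw ab dist_snd_le[of q p] True by auto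
        have zb: "z \<in> ball a r" "w \<in> ball a r" using dz dw by (auto simp: dist_commute)
        have Qp: "?Q p = deriv f a" using ab True by simp
        show "dist (?Q q) (?Q p) < e"
        proof (cases "z = w")
          case True
          then show ?thesis using rD[OF zb(1)] zw Qp e by (simp add: dist_norm)
        next
          case False
          have seg: "closed_segment w z \<subseteq> ball a r"
            using zb convex_ball convex_contains_segment by blast
          have der: "\<And>x. x \<in> ball a r \<Longrightarrow> ((\<lambda>x. f x - deriv f a * x) has_field_derivative
                   (deriv f x - deriv f a)) (at x within ball a r)"
            using r by (auto intro!: derivative_eq_intros holomorphic_derivI[OF holf A])
          have ci: "((\<lambda>x. deriv f x - deriv f a) has_contour_integral
                 ((f z - deriv f a * z) - (f w - deriv f a * w))) (linepath w z)"
            using contour_integral_primitive[OF der, of "linepath w z"] seg by auto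
          have "norm ((f z - deriv f a * z) - (f w - deriv f a * w)) \<le> e/2 * norm (z - w)"
            using has_contour_integral_bound_linepath[OF ci, of "e/2"] e rD seg by (meson less_imp_le half_gt_zero subsetD)
          then have "norm ((f z - f w) - deriv f a * (z - w)) \<le> e/2 * norm (z - w)"
            by (simp add: algebra_simps)
          moreover have "(f z - f w) / (z - w) - deriv f a = ((f z - f w) - deriv f a * (z - w)) / (z - w)"
            using False by (simp add: field_simps)
          ultimately have "norm ((f z - f w) / (z - w) - deriv f a) \<le> e/2"
            using False by (simp add: norm_divide divide_le_eq)
          then show ?thesis using zw Qp False e by (simp add: dist_norm)
        qed
      qed (use r in auto)
    qed
  qed
qed

theorem lemma2p2:
  fixes f :: "complex \<Rightarrow> complex" and \<beta> :: real
    and \<Omega> K :: "complex set"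
  assumes "0 < \<beta>" "\<beta> < 1"
    and "f holomorphic_on {z. \<beta> < norm z \<and> norm z < 1}"
    and "inj_on f {z. \<beta> < norm z \<and> norm z < 1}"
    and "open \<Omega>" "bounded \<Omega>" "compact K" "K \<subseteq> \<Omega>"
    and "f ` {z. \<beta> < norm z \<and> norm z < 1} = \<Omega> - K"
  shows "\<exists>g. g holomorphic_on {z. \<beta> < norm z \<and> norm z < 1} \<and>
           (\<forall>z \<in> {z. \<beta> < norm z \<and> norm z < 1}. (g z)\<^sup>2 = 1 / deriv f z)"
proof -
  define A where "A = {z::complex. \<beta> < norm z \<and> norm z < 1}"
  define S where "S = {w. ln \<beta> < Re w \<and> Re w < 0}"
  define T where "T = S \<times> {0..1/2::real}"
  define D where "D = deriv f"
  define Q where "Q = (\<lambda>p. if fst p = snd p then D (fst p)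
            else (f (fst p) - f (snd p)) / (fst p - snd p))"
  define \<Phi> where "\<Phi> = (\<lambda>p. Q (exp (fst p), exp (fst p + of_real (2 * pi * snd p) * \<i>)))"
  define P where "P = 2 * of_real pi * \<i>"
  define H where "H = of_real pi * \<i>"
  have b0: "0 < \<beta>" "\<beta> < 1" using assms by auto
  have holf: "f holomorphic_on A" using assms A_def by simp
  have injf: "inj_on f A" using assms A_def by simp
  have oA: "open A" unfolding A_def
    by (intro open_Collect_conj open_Collect_less continuous_intros)
  have Dnz: "\<And>z. z \<in> A \<Longrightarrow> D z \<noteq> 0"
    unfolding D_def using holomorphic_injective_imp_regular[OF holf oA injf] by blast
  have holD: "D holomorphic_on A" unfolding D_def using holomorphic_deriv[OF holf oA] .
  have cQ: "continuous_on (A \<times> A) Q" unfolding Q_def D_def using dq_cont[OF holf oA] .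
  have Qnz: "Q (z,w) \<noteq> 0" if "z \<in> A" "w \<in> A" for z w
  proof (cases "z = w")
    case True then show ?thesis using Dnz that by (simp add: Q_def)
  next
    case False
    then have "f z \<noteq> f w" using injf that inj_on_def by metis
    then show ?thesis using False by (simp add: Q_def)
  qed
  have Qsym: "Q (z,w) = Q (w,z)" for z w
  proof (cases "z = w")
    case False
    have "(f z - f w) / (z - w) = (f w - f z) / (w - z)"
      by (metis minus_diff_eq minus_divide_divide)
    then show ?thesis using False by (simp add: Q_def)
  qed simp
  have QD: "Q (z,z) = D z" for z by (simp add: Q_def)
  have normexp: "norm (exp (w + of_real t * \<i>)) = exp (Re w)" for w t
    by (simp add: norm_exp_eq_Re)
  have expA: "exp (w + of_real t * \<i>) \<in> A" if "w \<in> S" for w t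
  proof -
    have "ln \<beta> < Re w" "Re w < 0" using that by (auto simp: S_def)
    then have "exp (ln \<beta>) < exp (Re w)" "exp (Re w) < exp 0" by auto
    then show ?thesis using b0 normexp unfolding A_def by simp
  qed
  have expA0: "exp w \<in> A" if "w \<in> S" for w using expA[OF that, of 0] by simp
  have SP: "w + P \<in> S" "w - P \<in> S" "w + H \<in> S" if "w \<in> S" for w
    using that by (auto simp: S_def P_def H_def)
  have convS: "convex S" unfolding S_def
    using convex_Int[OF convex_halfspace_Re_gt convex_halfspace_Re_lt]
    by (simp add: Int_def)
  have convT: "convex T" unfolding T_def using convS by (intro convex_Times) auto
  have cPhi: "continuous_on T \<Phi>"
    unfolding \<Phi>_def
  proof (rule continuous_on_compose2[OF cQ])
    show "continuous_on T (\<lambda>p. (exp (fst p), exp (fst p + of_real (2 * pi * snd p) * \<i>)))"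
      by (intro continuous_intros)
    show "(\<lambda>p. (exp (fst p), exp (fst p + of_real (2 * pi * snd p) * \<i>))) ` T \<subseteq> A \<times> A"
    proof (rule image_subsetI)
      fix p assume "p \<in> T"
      then show "(\<lambda>p. (exp (fst p), exp (fst p + of_real (2 * pi * snd p) * \<i>))) p \<in> A \<times> A"
        using expA0[of "fst p"] expA[of "fst p" "2 * pi * snd p"] by (auto simp: T_def mem_Times_iff)
    qed
  qed
  have Phinz: "\<Phi> p \<noteq> 0" if "p \<in> T" for p
    using that Qnz[OF expA0[of "fst p"] expA[of "fst p" "2 * pi * snd p"]]
    by (auto simp: \<Phi>_def T_def mem_Times_iff)
  obtain \<Lambda> where c\<Lambda>: "continuous_on T \<Lambda>" and e\<Lambda>: "\<And>p. p \<in> T \<Longrightarrow> \<Phi> p = exp (\<Lambda> p)"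
    using continuous_logarithm_on_contractible[OF cPhi convex_imp_contractible[OF convT] Phinz]
    by metis
  have PhiP: "\<Phi> (w + P, s) = \<Phi> (w, s)" for w s
    by (simp add: \<Phi>_def P_def exp_add)
  have PhiH: "\<Phi> (w + H, 1/2) = \<Phi> (w, 1/2)" for w
  proof -
    have "\<Phi> (w + H, 1/2) = Q (- exp w, exp w)"
      by (simp add: \<Phi>_def H_def exp_add)
    also have "\<dots> = Q (exp w, - exp w)" by (rule Qsym)
    also have "\<dots> = \<Phi> (w, 1/2)" by (simp add: \<Phi>_def exp_add)
    finally show ?thesis .
  qed
  have Phi0: "\<Phi> (w, 0) = D (exp w)" for w by (simp add: \<Phi>_def QD)
  define E where "E = (\<lambda>p. \<Lambda> (fst p + P, snd p) - \<Lambda> p)"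
  have TP: "(fst p + P, snd p) \<in> T" if "p \<in> T" for p using that SP by (auto simp: T_def)
  have cE: "continuous_on T E" unfolding E_def
    by (intro continuous_intros continuous_on_compose2[OF c\<Lambda>]) (use TP in auto)
  have "E constant_on T"
  proof (rule const_exp1[OF convex_connected[OF convT] cE])
    fix p assume p: "p \<in> T"
    show "exp (E p) = 1" using e\<Lambda>[OF p] e\<Lambda>[OF TP[OF p]] PhiP[of "fst p" "snd p"] Phinz[OF p]
      by (simp add: E_def exp_diff)
  qed
  then obtain cE where Ec: "\<And>p. p \<in> T \<Longrightarrow> E p = cE" by (meson constant_on_def)
  define F where "F = (\<lambda>w. \<Lambda> (w + H, 1/2) - \<Lambda> (w, 1/2))"
  have Th: "(w, 1/2) \<in> T" if "w \<in> S" for w using that by (auto simp: T_def)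
  have cF: "continuous_on S F" unfolding F_def
    by (intro continuous_intros continuous_on_compose2[OF c\<Lambda>]) (use Th SP in auto)
  have eF: "exp (F w) = 1" if w: "w \<in> S" for w
    using e\<Lambda>[OF Th[OF w]] e\<Lambda>[OF Th[OF SP(3)[OF w]]] PhiH[of w] Phinz[OF Th[OF w]]
      by (simp add: F_def exp_diff)
  have "F constant_on S" using const_exp1[OF convex_connected[OF convS] cF] eF by blast
  then obtain cF where Fc: "\<And>w. w \<in> S \<Longrightarrow> F w = cF" by (meson constant_on_def)
  define w0 where "w0 = (of_real (ln \<beta> / 2) :: complex)"
  have w0S: "w0 \<in> S" using b0 by (simp add: S_def w0_def)
  have ecF: "exp cF = 1" using Fc[OF w0S] eF[OF w0S] by simp
  have Lper: "\<Lambda> (w + P, 0) = \<Lambda> (w, 0) + 2 * cF" if w: "w \<in> S" for w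
  proof -
    have T0: "(w, 0) \<in> T" using w by (simp add: T_def)
    have HH: "w + H + H = w + P" by (simp add: H_def P_def)
    have "\<Lambda> (w + P, 0) - \<Lambda> (w, 0) = E (w, 0)" by (simp add: E_def)
    also have "\<dots> = E (w, 1/2)" using Ec T0 Th[OF w] by simp
    also have "\<dots> = F (w + H) + F w" by (simp add: E_def F_def HH[symmetric])
    also have "\<dots> = 2 * cF" using Fc w SP(3)[OF w] by simp
    finally show ?thesis by (simp add: algebra_simps)
  qed
  define L where "L = (\<lambda>w. \<Lambda> (w, 0))"
  have cL: "continuous_on S L" unfolding L_def
    by (intro continuous_intros continuous_on_compose2[OF c\<Lambda>]) (auto simp: T_def)
  have eL: "exp (L w) = D (exp w)" if "w \<in> S" for w
    using e\<Lambda>[of "(w,0)"] that Phi0 by (simp add: L_def T_def)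
  define h where "h = (\<lambda>w. 1 / D (exp w))"
  have holh: "h holomorphic_on S" unfolding h_def
  proof (intro holomorphic_intros)
    show "(\<lambda>w. D (exp w)) holomorphic_on S"
      using holomorphic_on_compose_gen[OF holomorphic_on_exp holD, of S] expA0 by (auto simp: o_def)
  qed (use Dnz expA0 in auto)
  obtain G where holG: "G holomorphic_on S" and eG: "\<And>w. w \<in> S \<Longrightarrow> h w = exp (G w)"
  proof (rule g_imp_holomorphic_log[OF holh, of "\<lambda>w. - L w"])
    show "continuous_on S (\<lambda>w. - L w)" using cL by (intro continuous_intros)
    show "h x = exp (- L x)" if "x \<in> S" for x using eL[OF that] by (simp add: h_def exp_minus divide_inverse)
    show "h z \<noteq> 0" if "z \<in> S" for z using Dnz expA0 that by (simp add: h_def)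
  qed blast
  have "(\<lambda>w. G w + L w) constant_on S"
  proof (rule const_exp1[OF convex_connected[OF convS]])
    show "continuous_on S (\<lambda>w. G w + L w)"
      using holG cL holomorphic_on_imp_continuous_on by (intro continuous_intros) auto
    fix w assume w: "w \<in> S"
    show "exp (G w + L w) = 1" using eG[OF w] eL[OF w] Dnz[OF expA0[OF w]]
      by (simp add: exp_add h_def) (metis divide_self_if times_divide_eq_left mult_1)
  qed
  then obtain cK where Kc: "\<And>w. w \<in> S \<Longrightarrow> G w + L w = cK" by (meson constant_on_def)
  have Gper: "G (w + P) = G w - 2 * cF" if w: "w \<in> S" for w
  proof -
    have k: "G (w + P) + (L w + 2*cF) = G w + L w"
      using Kc[OF w] Kc[OF SP(1)[OF w]] Lper[OF w] by (simp add: L_def)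
    have "G (w + P) = (G w + L w) - (L w + 2*cF)" using k by (simp add: eq_diff_eq)
    then show ?thesis by simp
  qed
  define \<psi> where "\<psi> = (\<lambda>w. exp (G w / 2))"
  have hol\<psi>: "\<psi> holomorphic_on S" unfolding \<psi>_def using holG by (intro holomorphic_intros) auto
  have \<psi>per: "\<psi> (w + P) = \<psi> w" if w: "w \<in> S" for w
  proof -
    have "\<psi> (w + P) = exp (G w / 2 - cF)" using Gper[OF w] by (simp add: \<psi>_def diff_divide_distrib)
    also have "\<dots> = \<psi> w" using ecF by (simp add: \<psi>_def exp_diff)
    finally show ?thesis .
  qed
  have \<psi>sq: "(\<psi> w)\<^sup>2 = 1 / D (exp w)" if "w \<in> S" for w
    using eG[OF that] by (simp add: \<psi>_def h_def exp_double[symmetric])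
  define g where "g = (\<lambda>z. \<psi> (Ln z))"
  have LnS: "Ln z \<in> S" if z: "z \<in> A" for z
  proof -
    have "z \<noteq> 0" "\<beta> < norm z" "norm z < 1" using z b0 by (auto simp: A_def)
    then show ?thesis using b0 by (simp add: S_def)
  qed
  have gsq: "(g z)\<^sup>2 = 1 / deriv f z" if z: "z \<in> A" for z
  proof -
    have "z \<noteq> 0" using z b0 by (auto simp: A_def)
    then show ?thesis using \<psi>sq[OF LnS[OF z]] by (simp add: g_def D_def)
  qed
  define A1 where "A1 = A - \<real>\<^sub>\<le>\<^sub>0"
  define A2 where "A2 = A \<inter> {z. Re z < 0}"
  have oA1: "open A1" unfolding A1_def using oA by (intro open_Diff) auto
  have oA2: "open A2" unfolding A2_def using oA by (intro open_Int open_halfspace_Re_lt)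
  have hol1: "g holomorphic_on A1"
  proof -
    have "(\<psi> \<circ> Ln) holomorphic_on A1"
      by (rule holomorphic_on_compose_gen[OF _ hol\<psi>]) (auto simp: A1_def intro!: holomorphic_on_Ln LnS)
    then show ?thesis by (simp add: g_def o_def)
  qed
  have hol2: "g holomorphic_on A2"
  proof -
    have mz: "- z \<notin> \<real>\<^sub>\<le>\<^sub>0" if "z \<in> A2" for z using that by (auto simp: A2_def complex_nonpos_Reals_iff)
    have S2: "Ln (- z) + H \<in> S" if "z \<in> A2" for z
    proof -
      have "- z \<in> A" using that by (simp add: A2_def A_def)
      then show ?thesis using LnS[of "-z"] by (simp add: S_def H_def)
    qed
    have "(\<psi> \<circ> (\<lambda>z. Ln (- z) + H)) holomorphic_on A2"
      by (rule holomorphic_on_compose_gen[OF _ hol\<psi>]) (use mz S2 in \<open>auto intro!: holomorphic_intros\<close>)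
    moreover have "(\<psi> \<circ> (\<lambda>z. Ln (- z) + H)) z = g z" if z: "z \<in> A2" for z
    proof -
      have z0: "z \<noteq> 0" using z b0 by (auto simp: A2_def A_def)
      have "exp (Ln (- z) + H) = exp (Ln z)" using z0 by (simp add: exp_add H_def)
      then obtain n :: int where n: "Ln (- z) + H = Ln z + of_int (2 * n) * pi * \<i>"
        using exp_eq by blast
      have "Ln (- z) + H = Ln z + of_int n * P" using n by (simp add: P_def algebra_simps)
      then show ?thesis
        using periodic_int[of S P \<psi> "Ln z" n] SP \<psi>per LnS z by (auto simp: g_def A2_def)
    qed
    ultimately show ?thesis by (rule holomorphic_transform)
  qed
  have "A = A1 \<union> A2"
  proof -
    have "z \<in> A2" if "z \<in> A" "z \<in> \<real>\<^sub>\<le>\<^sub>0" for z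
    proof -
      have "z \<noteq> 0" using that b0 by (auto simp: A_def)
      then have "Re z \<noteq> 0" using that by (auto simp: complex_nonpos_Reals_iff complex_eq_iff)
      then show ?thesis using that by (auto simp: A2_def complex_nonpos_Reals_iff)
    qed
    then show ?thesis by (auto simp: A1_def A2_def)
  qed
  then have "g holomorphic_on A" using holomorphic_on_Un[OF hol1 hol2 oA1 oA2] by simp
  then show ?thesis using gsq unfolding A_def by blast
qed

end
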